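(* Every pluri-diamond $u:[0,1]\to{\bf Q}_2(\mathbb{R})$ is a Dirichlet $4$-quasiminimizer on $(0,1)$, i.e. for every interval $(a,b)\subset(0,1)$, $\mathrm{Dir}(u;(a,b))\le 4\,\mathrm{Dir}(v;(a,b))$ where $v$ is Dirichlet minimizing on $(a,b)$ with $v(a)=u(a)$, $v(b)=u(b)$.
   Context: ${\bf Q}_2(\mathbb{R})$ is the space of unordered pairs $[[x]]+[[y]]$ of reals with metric $\mathcal{G}([[x_1]]+[[x_2]],[[y_1]]+[[y_2]])=\min_\sigma(\sum_i|x_i-y_{\sigma(i)}|^2)^{1/2}$. For a Lipschitz $u=[[u_1]]+[[u_2]]$ with $u_1\le u_2$ on an interval $I$, $\mathrm{Dir}(u;I)=\int_I(u_1')^2+(u_2')^2\,dx$; $v$ is Dirichlet minimizing on $(a,b)$ with given endpoint values if it minimizes $\mathrm{Dir}(\cdot;(a,b))$ among (Sobolev) ${\bf Q}_2(\mathbb{R})$-valued functions with those endpoint values. A diamond above $[a,b]$ is a map $u:[a,b]\to{\bf Q}_2(\mathbb{R})$ whose graph is the parallelogram with vertices $(a,h),((a+b)/2,h),((a+b)/2,h+(b-a)/2),(b,h+(b-a)/2)$ for some $h\in\mathbb{R}$ (one branch is constant $h$ on $[a,(a+b)/2]$ then has slope $1$; the other has slope $1$ on $[a,(a+b)/2]$ then is constant). A pluri-diamond is a continuous $u:[0,1]\to{\bf Q}_2(\mathbb{R})$ admitting a partition of $[0,1]$ into intervals $I_j$ such that on each $I_j$, $u$ is either a diamond or of the form $x\mapsto2[[x+p_j]]$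 with $p_j\in\mathbb{R}$. *)

theory Defs
  imports "HOL-Analysis.Analysis"
begin

text \<open>A map into Q_2(R) (unordered pairs of reals) is represented by its sorted
  selection: two real functions q1 \<le> q2, the unordered pair at x being [[q1 x]] + [[q2 x]].\<close>

definition W12 :: "real \<Rightarrow> real \<Rightarrow> (real \<Rightarrow> real) \<Rightarrow> bool" where
  "W12 a b f \<longleftrightarrow> (\<exists>g. g absolutely_integrable_on {a..b} \<and> (\<lambda>x. (g x)\<^sup>2) integrable_on {a..b}
     \<and> (\<forall>x\<in>{a..b}. f x = f a + integral {a..x} g))"

definition Q2_sobolev :: "real \<Rightarrow> real \<Rightarrow> (real \<Rightarrow> real) \<Rightarrow> (real \<Rightarrow> real) \<Rightarrow> bool" where
  "Q2_sobolev a b q1 q2 \<longleftrightarrow> (\<forall>x\<in>{a..b}. q1 x \<le> q2 x) \<and> W12 a b q1 \<and> W12 a b q2"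

definition Dir :: "real \<Rightarrow> real \<Rightarrow> (real \<Rightarrow> real) \<Rightarrow> (real \<Rightarrow> real) \<Rightarrow> real" where
  "Dir a b q1 q2 = integral {a..b} (\<lambda>x. (deriv q1 x)\<^sup>2 + (deriv q2 x)\<^sup>2)"

text \<open>v = [[v1]]+[[v2]] is Dirichlet minimizing on (a,b) among Sobolev maps with
  the same endpoint values (equality of unordered pairs = equality of sorted pairs).\<close>
definition dir_minimizing :: "real \<Rightarrow> real \<Rightarrow> (real \<Rightarrow> real) \<Rightarrow> (real \<Rightarrow> real) \<Rightarrow> bool" where
  "dir_minimizing a b v1 v2 \<longleftrightarrow> Q2_sobolev a b v1 v2 \<and>
     (\<forall>w1 w2. Q2_sobolev a b w1 w2 \<and> w1 a = v1 a \<and> w2 a = v2 a \<and> w1 b = v1 b \<and> w2 b = v2 b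
        \<longrightarrow> Dir a b v1 v2 \<le> Dir a b w1 w2)"

text \<open>On the interval I, u is a diamond above [a,b] (closure of I), at height h.
  Sorted branches: lower = h + max 0 (x - m), upper = h + min (x - a) (m - a), m = (a+b)/2.\<close>
definition diamond_on :: "real set \<Rightarrow> (real \<Rightarrow> real) \<Rightarrow> (real \<Rightarrow> real) \<Rightarrow> bool" where
  "diamond_on I u1 u2 \<longleftrightarrow> (\<exists>a b h. a < b \<and> I \<subseteq> {a..b} \<and> {a<..<b} \<subseteq> I \<and>
     (\<forall>x\<in>I. u1 x = h + max 0 (x - (a + b) / 2) \<and> u2 x = h + min (x - a) ((b - a) / 2)))"

definition pluri_diamond :: "(real \<Rightarrow> real) \<Rightarrow> (real \<Rightarrow> real) \<Rightarrow> bool" where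
  "pluri_diamond u1 u2 \<longleftrightarrow>
     continuous_on {0..1} u1 \<and> continuous_on {0..1} u2 \<and> (\<forall>x\<in>{0..1}. u1 x \<le> u2 x) \<and>
     (\<exists>\<I>. countable \<I> \<and> \<Union>\<I> = {0..1} \<and> pairwise disjnt \<I> \<and>
        (\<forall>I\<in>\<I>. I \<noteq> {} \<and> is_interval I \<and>
           (diamond_on I u1 u2 \<or> (\<exists>p. \<forall>x\<in>I. u1 x = x + p \<and> u2 x = x + p))))"

end

theory Submission
  imports Defs
begin


lemma interval_Inf_Sup:
  fixes I :: "real set"
  assumes "is_interval I" "I \<subseteq> {0..1}" "x \<in> I" "Inf I < y" "y < Sup I"
  shows "y \<in> I"
proof -
  have bb: "bdd_below I" "bdd_above I" using bdd_below_mono[OF bdd_below_Icc assms(2)] bdd_above_mono[OF bdd_above_Icc assms(2)] by auto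
  obtain i1 where "i1 \<in> I" "i1 < y" using assms(3,4) cInf_less_iff[of I y] bb by blast
  moreover obtain i2 where "i2 \<in> I" "y < i2" using assms(3,5) less_cSup_iff[of I y] bb by blast
  ultimately show ?thesis using assms(1) unfolding is_interval_1 by (meson less_eq_real_def)
qed

lemma local_forms:
  assumes pd: "pluri_diamond u1 u2"
  shows "\<exists>Ex. countable Ex \<and> (\<forall>x\<in>{0..1} - Ex. \<exists>l r. l < x \<and> x < r \<and>
     ((\<exists>p. \<forall>z\<in>{l<..<r}. u1 z = z + p \<and> u2 z = z + p) \<or>
      (\<exists>h c. \<forall>z\<in>{l<..<r}. u1 z = h \<and> u2 z = z + c) \<or>
      (\<exists>h c. \<forall>z\<in>{l<..<r}. u1 z = z + c \<and> u2 z = h)))"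
proof -
  obtain \<I> where cI: "countable \<I>" and UI: "\<Union>\<I> = {0..1}" and
    P: "\<And>I. I \<in> \<I> \<Longrightarrow> I \<noteq> {} \<and> is_interval I \<and>
           (diamond_on I u1 u2 \<or> (\<exists>p. \<forall>x\<in>I. u1 x = x + p \<and> u2 x = x + p))"
    using pd unfolding pluri_diamond_def by blast
  define Ex where "Ex = (\<Union>I\<in>\<I>. {Inf I, Sup I, (Inf I + Sup I) / 2})"
  have A: "countable Ex" unfolding Ex_def using cI by (intro countable_UN) auto
  have B: "\<exists>l r. l < x \<and> x < r \<and>
     ((\<exists>p. \<forall>z\<in>{l<..<r}. u1 z = z + p \<and> u2 z = z + p) \<or>
      (\<exists>h c. \<forall>z\<in>{l<..<r}. u1 z = h \<and> u2 z = z + c) \<or>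
      (\<exists>h c. \<forall>z\<in>{l<..<r}. u1 z = z + c \<and> u2 z = h))" if x: "x \<in> {0..1} - Ex" for x
  proof -
    have "x \<in> \<Union>\<I>" using x UI by auto
    then obtain I where I: "I \<in> \<I>" "x \<in> I" by blast
    have sub: "I \<subseteq> {0..1}" using I UI by auto
    have bb: "bdd_below I" "bdd_above I" using bdd_below_mono[OF bdd_below_Icc sub] bdd_above_mono[OF bdd_above_Icc sub] by auto
    have ne: "x \<noteq> Inf I" "x \<noteq> Sup I" "x \<noteq> (Inf I + Sup I)/2" using x I unfolding Ex_def by auto
    have lt: "Inf I < x" "x < Sup I"
      using cInf_lower[OF I(2) bb(1)] cSup_upper[OF I(2) bb(2)] ne by auto
    have ii: "is_interval I" using P I by blast
    have inI: "{Inf I<..<Sup I} \<subseteq> I" using interval_Inf_Sup[OF ii sub I(2)] by auto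
    from P[OF I(1)] consider "diamond_on I u1 u2" | "\<exists>p. \<forall>x\<in>I. u1 x = x + p \<and> u2 x = x + p" by blast
    then show ?thesis
    proof cases
      case 2
      then obtain p where "\<forall>x\<in>I. u1 x = x + p \<and> u2 x = x + p" by blast
      then have "\<forall>z\<in>{Inf I<..<Sup I}. u1 z = z + p \<and> u2 z = z + p" using inI by blast
      then have "(\<exists>p. \<forall>z\<in>{Inf I<..<Sup I}. u1 z = z + p \<and> u2 z = z + p)" by blast
      then show ?thesis using lt by (intro exI[of _ "Inf I"] exI[of _ "Sup I"]) simp
    next
      case 1
      then obtain a' b' h where ab: "a' < b'" "I \<subseteq> {a'..b'}" "{a'<..<b'} \<subseteq> I"
        and F: "\<forall>x\<in>I. u1 x = h + max 0 (x - (a' + b') / 2) \<and> u2 x = h + min (x - a') ((b' - a') / 2)"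
        unfolding diamond_on_def by blast
      have "Inf I = a'"
      proof (rule antisym)
        show "Inf I \<le> a'" using cInf_superset_mono[OF _ bb(1) ab(3)] ab(1) by auto
        show "a' \<le> Inf I" using ab(2) I(2) by (intro cInf_greatest) auto
      qed
      moreover have "Sup I = b'"
      proof (rule antisym)
        show "b' \<le> Sup I" using cSup_subset_mono[OF _ bb(2) ab(3)] ab(1) by auto
        show "Sup I \<le> b'" using ab(2) I(2) by (intro cSup_least) auto
      qed
      ultimately have lt': "a' < x" "x < b'" "x \<noteq> (a'+b')/2" using lt ne by auto
      show ?thesis
      proof (cases "x < (a'+b')/2")
        case True
        have "\<forall>z\<in>{a'<..<(a'+b')/2}. u1 z = h \<and> u2 z = z + (h - a')"
          using F ab(3) by (auto simp: subset_iff)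
        then show ?thesis using lt' True by (intro exI[of _ a'] exI[of _ "(a'+b')/2"]) auto
      next
        case False
        have "\<forall>z\<in>{(a'+b')/2<..<b'}. u1 z = z + (h - (a'+b')/2) \<and> u2 z = h + (b' - a') / 2"
          using F ab(3) by (auto simp: subset_iff)
        then show ?thesis using lt' False by (intro exI[of _ "(a'+b')/2"] exI[of _ b']) auto
      qed
    qed
  qed
  show ?thesis by (rule exI[of _ Ex], rule conjI[OF A], rule ballI, rule B)
qed



lemma mono_countable:
  fixes f :: "real \<Rightarrow> real"
  assumes cont: "continuous_on {0..1} f" and cE: "countable E0"
    and loc: "\<And>x. x \<in> {0..1} - E0 \<Longrightarrow> \<exists>r>x. \<forall>z. x < z \<and> z < r \<longrightarrow> f x \<le> f z"
    and ab: "0 \<le> a" "a \<le> b" "b \<le> 1"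
  shows "f a \<le> f b"
proof (rule ccontr)
  assume "\<not> f a \<le> f b"
  hence lt: "f b < f a" by simp
  have "uncountable {f b<..<f a}" using lt uncountable_open_interval by blast
  moreover have "countable (f ` E0)" using cE by blast
  ultimately obtain y where y: "y \<in> {f b<..<f a}" "y \<notin> f ` E0"
    by (metis countable_subset subsetI)
  define S where "S = {x\<in>{a..b}. y \<le> f x}"
  have cS: "closed S"
  proof -
    have "continuous_on {a..b} f" by (rule continuous_on_subset[OF cont]) (use ab in auto)
    then have "closed ({a..b} \<inter> f -` {y..})" by (rule continuous_closed_preimage) auto
    moreover have "S = {a..b} \<inter> f -` {y..}" unfolding S_def by auto
    ultimately show ?thesis by simp
  qed
  have aS: "a \<in> S" using y ab unfolding S_def by auto
  have bS: "bdd_above S" unfolding S_def by (rule bdd_aboveI[of _ b]) auto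
  define s where "s = Sup S"
  have sS: "s \<in> S" unfolding s_def using closed_contains_Sup[OF _ bS cS] aS by auto
  have s_ab: "a \<le> s" "s \<le> b" using sS unfolding S_def by auto
  have fs: "y \<le> f s" using sS unfolding S_def by auto
  have "s \<noteq> b" using fs y(1) by auto
  hence sb: "s < b" using s_ab by auto
  have upper: "\<And>z. z \<in> {a..b} \<Longrightarrow> s < z \<Longrightarrow> f z < y"
  proof -
    fix z assume "z \<in> {a..b}" "s < z"
    then show "f z < y" using cSup_upper[OF _ bS, of z] unfolding S_def s_def by force
  qed
  have fsy: "f s = y"
  proof (rule ccontr)
    assume "f s \<noteq> y"
    hence gt: "f s > y" using fs by auto
    have "s \<in> {0..1}" using s_ab ab by auto
    then obtain d where d: "d > 0" "\<And>z. z \<in> {0..1} \<Longrightarrow> dist z s < d \<Longrightarrow> dist (f z) (f s) < f s - y"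
      using cont gt unfolding continuous_on_iff by (metis diff_gt_0_iff_gt)
    define z where "z = min (s + d/2) b"
    have z: "z \<in> {a..b}" "s < z" "dist z s < d" using d sb s_ab unfolding z_def dist_real_def by auto
    hence "dist (f z) (f s) < f s - y" using d(2)[of z] ab by auto
    hence "f z > y" unfolding dist_real_def by auto
    with upper[OF z(1,2)] show False by auto
  qed
  hence "s \<notin> E0" using y(2) by auto
  moreover have "s \<in> {0..1}" using s_ab ab by auto
  ultimately obtain r where r: "r > s" "\<And>z. s < z \<and> z < r \<Longrightarrow> f s \<le> f z" using loc by blast
  define z where "z = min ((s + r)/2) b"
  have z: "z \<in> {a..b}" "s < z" "z < r" using r sb s_ab unfolding z_def by (auto simp: min_less_iff_disj)
  have "f s \<le> f z" using r(2) z by auto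
  with upper[OF z(1,2)] fsy show False by auto
qed

lemma cauchy_schwarz_int:
  fixes g :: "real \<Rightarrow> real"
  assumes "g integrable_on {a..b}" "(\<lambda>x. (g x)\<^sup>2) integrable_on {a..b}" "a < b"
  shows "(integral {a..b} g)\<^sup>2 / (b - a) \<le> integral {a..b} (\<lambda>x. (g x)\<^sup>2)"
proof -
  define I where "I = integral {a..b} g"
  define c where "c = I / (b - a)"
  have eq: "(\<lambda>x. (g x - c)\<^sup>2) = (\<lambda>x. ((g x)\<^sup>2 - (2 * c) * g x) + c\<^sup>2)"
    by (rule ext) (simp add: power2_eq_square algebra_simps)
  have i1: "(\<lambda>x. (g x)\<^sup>2 - (2 * c) * g x) integrable_on {a..b}"
  proof -
    have "(\<lambda>x. (2*c) * g x) integrable_on {a..b}" using integrable_cmul[OF assms(1), of "2*c"] by simp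
    then show ?thesis using assms by (intro integrable_diff) auto
  qed
  have "0 \<le> integral {a..b} (\<lambda>x. (g x - c)\<^sup>2)"
    by (rule integral_nonneg) (auto simp: eq intro!: integrable_add i1)
  also have "\<dots> = integral {a..b} (\<lambda>x. (g x)\<^sup>2) - 2 * c * I + c\<^sup>2 * (b - a)"
  proof -
    have m: "(\<lambda>x. (2*c) * g x) integrable_on {a..b}" using integrable_cmul[OF assms(1), of "2*c"] by simp
    have "integral {a..b} (\<lambda>x. ((g x)\<^sup>2 - (2 * c) * g x) + c\<^sup>2)
       = integral {a..b} (\<lambda>x. (g x)\<^sup>2 - (2 * c) * g x) + integral {a..b} (\<lambda>x. c\<^sup>2)"
      by (rule integral_add[OF i1]) auto
    also have "integral {a..b} (\<lambda>x. (g x)\<^sup>2 - (2 * c) * g x) = integral {a..b} (\<lambda>x. (g x)\<^sup>2) - integral {a..b} (\<lambda>x. (2 * c) * g x)"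
      by (rule integral_diff[OF assms(2) m])
    also have "integral {a..b} (\<lambda>x. (2 * c) * g x) = 2 * c * I" unfolding I_def by simp
    also have "integral {a..b} (\<lambda>x. c\<^sup>2) = c\<^sup>2 * (b - a)" using assms(3) by simp
    finally show ?thesis unfolding eq by simp
  qed
  finally have "0 \<le> integral {a..b} (\<lambda>x. (g x)\<^sup>2) - 2 * c * I + c\<^sup>2 * (b - a)" .
  moreover have "2 * c * I - c\<^sup>2 * (b - a) = I\<^sup>2 / (b - a)"
  proof -
    define L where "L = b - a"
    have L: "L \<noteq> 0" using assms(3) unfolding L_def by simp
    have "2 * (I/L) * I - (I/L)\<^sup>2 * L = I\<^sup>2 / L" using L by (simp add: field_simps power2_eq_square)
    then show ?thesis unfolding c_def L_def .
  qed
  ultimately show ?thesis unfolding I_def by linarith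
qed



lemma negl_countable: "countable (S::real set) \<Longrightarrow> negligible S"
proof -
  assume c: "countable S"
  have "S = \<Union>((\<lambda>x. {x}) ` S)" by auto
  moreover have "negligible (\<Union>((\<lambda>x. {x}) ` S))"
    by (rule negligible_countable_Union) (use c in auto)
  ultimately show ?thesis by simp
qed



lemma ai: "(f::real\<Rightarrow>real) absolutely_integrable_on S \<Longrightarrow> f integrable_on S"
  by (rule set_lebesgue_integral_eq_integral(1))

lemma abs_cont:
  fixes g :: "real \<Rightarrow> real"
  assumes g: "g absolutely_integrable_on {a..b}" and e: "e > 0"
  shows "\<exists>d>0. \<forall>S. S \<in> sets lebesgue \<longrightarrow> S \<subseteq> {a..b} \<longrightarrow> measure lebesgue S < d \<longrightarrow>
           integral S (\<lambda>x. \<bar>g x\<bar>) \<le> e"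
proof -
  have ga: "(\<lambda>x. \<bar>g x\<bar>) absolutely_integrable_on {a..b}" using set_integrable_abs[OF g] .
  define f where "f n x = max (\<bar>g x\<bar> - real n) 0" for n :: nat and x
  have lmeas: "T \<in> lmeasurable" if "T \<in> sets lebesgue" "T \<subseteq> {a..b}" for T :: "real set"
    using bounded_set_imp_lmeasurable[OF bounded_subset[OF bounded_closed_interval that(2)] that(1)] .
  have fa: "f n absolutely_integrable_on T" if T: "T \<in> sets lebesgue" "T \<subseteq> {a..b}" for n T
  proof -
    have "(\<lambda>x. \<bar>g x\<bar>) absolutely_integrable_on T" by (rule set_integrable_subset[OF ga T])
    moreover have "(\<lambda>x. real n) absolutely_integrable_on T" by (rule absolutely_integrable_on_const[OF lmeas[OF T]])
    ultimately have "(\<lambda>x. \<bar>g x\<bar> - real n) absolutely_integrable_on T" by (rule set_integral_diff(1))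
    moreover have "(\<lambda>x. 0::real) absolutely_integrable_on T" by (rule absolutely_integrable_on_const[OF lmeas[OF T]])
    ultimately show ?thesis unfolding f_def by (rule absolutely_integrable_max_1)
  qed
  have gai: "(\<lambda>x. \<bar>g x\<bar>) integrable_on {a..b}" by (rule ai[OF ga])
  have lim: "(\<lambda>n. integral {a..b} (f n)) \<longlonglongrightarrow> integral {a..b} (\<lambda>x. 0)"
  proof (rule dominated_convergence(2))
    show "f n integrable_on {a..b}" for n using ai[OF fa[of "{a..b}" n]] by auto
    show "(\<lambda>x. \<bar>g x\<bar>) integrable_on {a..b}" by (rule gai)
    show "norm (f n x) \<le> \<bar>g x\<bar>" if "x \<in> {a..b}" for n x unfolding f_def by auto
    show "(\<lambda>n. f n x) \<longlonglongrightarrow> 0" if "x \<in> {a..b}" for x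
    proof (rule tendsto_eventually)
      show "\<forall>\<^sub>F n in sequentially. f n x = 0"
      proof (rule eventually_sequentiallyI[of "nat \<lceil>\<bar>g x\<bar>\<rceil>"])
        fix m assume m: "nat \<lceil>\<bar>g x\<bar>\<rceil> \<le> m"
        have "\<bar>g x\<bar> \<le> real (nat \<lceil>\<bar>g x\<bar>\<rceil>)" by (simp add: real_nat_ceiling_ge)
        also have "\<dots> \<le> real m" using m by (simp only: of_nat_le_iff)
        finally show "f m x = 0" unfolding f_def by simp
      qed
    qed
  qed
  then have "\<forall>\<^sub>F n in sequentially. integral {a..b} (f n) < e/2"
    using e by (intro order_tendstoD(2)) auto
  then obtain n where n: "integral {a..b} (f n) < e/2" by (meson eventually_sequentially order_refl)
  define d where "d = e / (2 * (real n + 1))"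
  have d: "d > 0" using e unfolding d_def by auto
  have nd: "real n * d \<le> e/2"
  proof -
    have "real n * d \<le> (real n + 1) * d" using d by (intro mult_right_mono) auto
    also have "\<dots> = e/2"
    proof -
      have h: "real n + 1 \<noteq> 0" by simp
      show ?thesis unfolding d_def using h by (metis (no_types) mult.commute nonzero_mult_divide_mult_cancel_left times_divide_eq_right)
    qed
    finally show ?thesis .
  qed
  have "integral S (\<lambda>x. \<bar>g x\<bar>) \<le> e" if S: "S \<in> sets lebesgue" "S \<subseteq> {a..b}" "measure lebesgue S < d" for S
  proof -
    have SL: "S \<in> lmeasurable" by (rule lmeas[OF S(1,2)])
    have i1: "(\<lambda>x. \<bar>g x\<bar>) integrable_on S"
      by (rule ai[OF set_integrable_subset[OF ga S(1,2)]])
    have i2: "f n integrable_on S" by (rule ai[OF fa[OF S(1,2)]])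
    have i3: "(\<lambda>x. real n) integrable_on S" using integrable_on_const[OF SL] by blast
    have "integral S (\<lambda>x. \<bar>g x\<bar>) \<le> integral S (\<lambda>x. real n + f n x)"
      by (rule integral_le[OF i1 integrable_add[OF i3 i2]]) (auto simp: f_def)
    also have "\<dots> = integral S (\<lambda>x. real n) + integral S (f n)" by (rule integral_add[OF i3 i2])
    also have "integral S (\<lambda>x. real n) = real n * measure lebesgue S"
    proof -
      have "integral S (\<lambda>x. real n) = integral S (\<lambda>x. real n * 1)" by simp
      also have "\<dots> = real n * integral S (\<lambda>x. 1)" by (rule integral_mult_right)
      finally show ?thesis using lmeasure_integral[OF SL] by simp
    qed
    also have "integral S (f n) \<le> integral {a..b} (f n)"
      by (rule integral_subset_le[OF S(2) i2]) (use ai[OF fa[of "{a..b}" n]] in \<open>auto simp: f_def\<close>)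
    also have "real n * measure lebesgue S \<le> real n * d" using S(3) by (intro mult_left_mono) auto
    finally show ?thesis using nd n by linarith
  qed
  then show ?thesis using d by blast
qed



lemma CL0:
  fixes g :: "real \<Rightarrow> real"
  assumes g: "g absolutely_integrable_on {a..b}" and t: "t > 0"
  defines "E \<equiv> {x \<in> {a<..<b}. g x < 0 \<and> (\<forall>\<delta>>0. \<exists>c d. c \<le> x \<and> x \<le> d \<and> c < d \<and> d - c < \<delta> \<and>
                 {c..d} \<subseteq> {a<..<b} \<and> t * (d - c) < integral {c..d} g)}"
  shows "negligible E"
proof -
  define G where "G = {x \<in> {a<..<b}. g x < 0}"
  have ga: "(\<lambda>x. \<bar>g x\<bar>) absolutely_integrable_on {a..b}" using set_integrable_abs[OF g] .
  have Gm: "G \<in> sets lebesgue"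
  proof -
    have "g \<in> borel_measurable (lebesgue_on {a..b})"
      using g absolutely_integrable_measurable[of "{a..b}" g] by auto
    then have "{x \<in> space (lebesgue_on {a..b}). g x < 0} \<in> sets (lebesgue_on {a..b})"
      unfolding borel_measurable_iff_less by blast
    then have "{x \<in> {a..b}. g x < 0} \<in> sets lebesgue"
      using sets_restrict_space_iff[of "{a..b}" lebesgue] by auto
    moreover have "{a<..<b} \<in> sets lebesgue" by simp
    ultimately have "{x \<in> {a..b}. g x < 0} \<inter> {a<..<b} \<in> sets lebesgue" by (rule sets.Int)
    moreover have "G = {x \<in> {a..b}. g x < 0} \<inter> {a<..<b}" unfolding G_def by auto
    ultimately show ?thesis by simp
  qed
  show ?thesis unfolding negligible_outer_le
  proof (intro allI impI)
    fix e :: real assume e: "e > 0"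
    obtain \<delta> where \<delta>: "\<delta> > 0" and AC: "\<And>S. S \<in> sets lebesgue \<Longrightarrow> S \<subseteq> {a..b} \<Longrightarrow> measure lebesgue S < \<delta> \<Longrightarrow>
        integral S (\<lambda>x. \<bar>g x\<bar>) \<le> t * e"
      using abs_cont[OF g, of "t*e"] t e by auto
    obtain T where T: "open T" "G \<subseteq> T" "T - G \<in> lmeasurable" "emeasure lebesgue (T - G) < ennreal \<delta>"
      using sets_lebesgue_outer_open[OF Gm \<delta>] by blast
    define U where "U = T \<inter> {a<..<b}"
    have Um: "U \<in> sets lebesgue" unfolding U_def using T(1) by (simp add: borel_open)
    have Uab: "U \<subseteq> {a..b}" unfolding U_def by auto
    have GU: "G \<subseteq> U" using T(2) unfolding U_def G_def by auto
    have UGm: "U - G \<in> sets lebesgue" using Um Gm by auto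
    have "measure lebesgue (U - G) \<le> measure lebesgue (T - G)"
      by (rule measure_mono_fmeasurable[OF _ UGm T(3)]) (auto simp: U_def)
    also have "measure lebesgue (T - G) < \<delta>"
      using T(4) emeasure_eq_measure2[OF T(3)] ennreal_less_iff[of "measure lebesgue (T - G)" \<delta>] by simp
    finally have UGmeas: "measure lebesgue (U - G) < \<delta>" .
    have intUG: "integral (U - G) (\<lambda>x. \<bar>g x\<bar>) \<le> t * e" using AC[OF UGm _ UGmeas] Uab by auto
    define h where "h x = (if x \<in> G then 0 else \<bar>g x\<bar>)" for x
    have h_int: "h integrable_on S" and h_eq: "integral S h = integral (S - G) (\<lambda>x. \<bar>g x\<bar>)"
      if S: "S \<in> sets lebesgue" "S \<subseteq> {a..b}" for S
    proof -
      have eq: "(\<lambda>x. if x \<in> S then h x else 0) = (\<lambda>x. if x \<in> S - G then \<bar>g x\<bar> else 0)"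
        by (rule ext) (auto simp: h_def)
      have "(\<lambda>x. \<bar>g x\<bar>) absolutely_integrable_on (S - G)"
        by (rule set_integrable_subset[OF ga]) (use S Gm in auto)
      then have "(\<lambda>x. \<bar>g x\<bar>) integrable_on (S - G)" by (rule ai)
      then have "(\<lambda>x. if x \<in> S - G then \<bar>g x\<bar> else 0) integrable_on UNIV"
        by (simp only: Henstock_Kurzweil_Integration.integrable_restrict_UNIV)
      then have "(\<lambda>x. if x \<in> S then h x else 0) integrable_on UNIV" by (simp only: eq)
      then show "h integrable_on S" by (simp only: Henstock_Kurzweil_Integration.integrable_restrict_UNIV)
      have "integral S h = integral UNIV (\<lambda>x. if x \<in> S then h x else 0)"
        by (simp only: Henstock_Kurzweil_Integration.integral_restrict_UNIV)
      also have "\<dots> = integral UNIV (\<lambda>x. if x \<in> S - G then \<bar>g x\<bar> else 0)" by (simp only: eq)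
      also have "\<dots> = integral (S - G) (\<lambda>x. \<bar>g x\<bar>)"
        by (simp only: Henstock_Kurzweil_Integration.integral_restrict_UNIV)
      finally show "integral S h = integral (S - G) (\<lambda>x. \<bar>g x\<bar>)" .
    qed
    define K where "K = {(c,d). c < d \<and> {c..d} \<subseteq> U \<and> t * (d - c) < integral {c..d} g}"
    define ct where "ct i = (fst i + snd i)/2" for i :: "real \<times> real"
    define rd where "rd i = (snd i - fst i)/2" for i :: "real \<times> real"
    have cb: "cball (ct i) (rd i) = {fst i..snd i}" for i
    proof -
      have "ct i - rd i = fst i" "ct i + rd i = snd i" unfolding ct_def rd_def by (simp_all add: field_simps)
      then show ?thesis unfolding cball_eq_atLeastAtMost by simp
    qed
    have rpos: "\<And>i. i \<in> K \<Longrightarrow> 0 < rd i" unfolding K_def rd_def by auto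
    have cover: "\<exists>i. i \<in> K \<and> x \<in> cball (ct i) (rd i) \<and> rd i < d0" if x: "x \<in> E" "0 < d0" for x d0
    proof -
      have xG: "x \<in> G" using x(1) unfolding E_def G_def by auto
      then obtain \<rho> where \<rho>: "\<rho> > 0" "ball x \<rho> \<subseteq> T" using T(1,2) open_contains_ball by blast
      have "min d0 \<rho> > 0" using \<rho> x(2) by simp
      then obtain c d where cd: "c \<le> x" "x \<le> d" "c < d" "d - c < min d0 \<rho>" "{c..d} \<subseteq> {a<..<b}"
          "t * (d - c) < integral {c..d} g"
        using x(1) unfolding E_def by blast
      have "{c..d} \<subseteq> ball x \<rho>"
      proof
        fix y assume "y \<in> {c..d}"
        then have "dist x y < \<rho>" using cd unfolding dist_real_def by auto
        then show "y \<in> ball x \<rho>" by simp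
      qed
      then have "{c..d} \<subseteq> U" using \<rho>(2) cd(5) unfolding U_def by auto
      then have "(c,d) \<in> K" using cd unfolding K_def by auto
      moreover have "x \<in> cball (ct (c,d)) (rd (c,d))" unfolding cb using cd by auto
      moreover have "rd (c,d) < d0" using cd unfolding rd_def by auto
      ultimately show ?thesis by blast
    qed
    obtain C where C: "countable C" "C \<subseteq> K"
        "pairwise (\<lambda>i j. disjnt (cball (ct i) (rd i)) (cball (ct j) (rd j))) C"
        "negligible (E - (\<Union>i\<in>C. cball (ct i) (rd i)))"
      using Vitali_covering_theorem_cballs[of K rd E ct, OF rpos cover] by blast
    have fb: "measure lebesgue (\<Union>i\<in>C'. cball (ct i) (rd i)) \<le> e" if C': "C' \<subseteq> C" "finite C'" for C'
    proof -
      have CK: "\<And>i. i \<in> C' \<Longrightarrow> i \<in> K" using C(2) C' by auto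
      have IU: "{fst i..snd i} \<subseteq> U" if "i \<in> C'" for i using CK[OF that] unfolding K_def by auto
      have Ilt: "fst i < snd i" if "i \<in> C'" for i using CK[OF that] unfolding K_def by auto
      have Iint: "t * (snd i - fst i) < integral {fst i..snd i} g" if "i \<in> C'" for i
        using CK[OF that] unfolding K_def by auto
      have "measure lebesgue (\<Union>i\<in>C'. cball (ct i) (rd i)) = measure lebesgue (\<Union>i\<in>C'. {fst i..snd i})"
        by (simp add: cb)
      also have "\<dots> \<le> (\<Sum>i\<in>C'. measure lebesgue {fst i..snd i})"
        by (rule measure_UNION_le[OF C'(2)]) auto
      also have "\<dots> = (\<Sum>i\<in>C'. snd i - fst i)"
        by (rule sum.cong) (use Ilt in \<open>auto simp: less_imp_le\<close>)
      finally have m1: "measure lebesgue (\<Union>i\<in>C'. cball (ct i) (rd i)) \<le> (\<Sum>i\<in>C'. snd i - fst i)" .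
      have gi: "g integrable_on {fst i..snd i}" if "i \<in> C'" for i
        by (rule integrable_on_subinterval[OF ai[OF g] subset_trans[OF IU[OF that] Uab]])
      have hi: "h integrable_on {fst i..snd i}" if "i \<in> C'" for i
        by (rule h_int[OF _ subset_trans[OF IU[OF that] Uab]]) auto
      have "t * (\<Sum>i\<in>C'. snd i - fst i) = (\<Sum>i\<in>C'. t * (snd i - fst i))" by (simp add: sum_distrib_left)
      also have "\<dots> \<le> (\<Sum>i\<in>C'. integral {fst i..snd i} g)"
        by (rule sum_mono) (use Iint in \<open>auto intro: less_imp_le\<close>)
      also have "\<dots> \<le> (\<Sum>i\<in>C'. integral {fst i..snd i} h)"
      proof (rule sum_mono)
        fix i assume i: "i \<in> C'"
        show "integral {fst i..snd i} g \<le> integral {fst i..snd i} h"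
          by (rule integral_le[OF gi[OF i] hi[OF i]]) (auto simp: h_def G_def)
      qed
      also have "\<dots> = integral (\<Union>i\<in>C'. {fst i..snd i}) h"
      proof -
        have "(h has_integral (\<Sum>i\<in>C'. integral {fst i..snd i} h)) (\<Union>i\<in>C'. {fst i..snd i})"
        proof (rule has_integral_UN[OF C'(2)])
          show "(h has_integral integral {fst i..snd i} h) {fst i..snd i}" if "i \<in> C'" for i
            using hi[OF that] by (rule integrable_integral)
          show "pairwise (\<lambda>i i'. negligible ({fst i..snd i} \<inter> {fst i'..snd i'})) C'"
          proof (rule pairwise_mono[OF C(3)])
            fix i j assume "disjnt (cball (ct i) (rd i)) (cball (ct j) (rd j))"
            then have "{fst i..snd i} \<inter> {fst j..snd j} = {}" unfolding cb disjnt_def .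
            then show "negligible ({fst i..snd i} \<inter> {fst j..snd j})" by simp
          qed (use C' in auto)
        qed
        then show ?thesis by (rule integral_unique[symmetric])
      qed
      also have "\<dots> \<le> integral U h"
      proof (rule integral_subset_le)
        show "(\<Union>i\<in>C'. {fst i..snd i}) \<subseteq> U" using IU by auto
        have "(\<Union>i\<in>C'. {fst i..snd i}) \<in> sets lebesgue" using C'(2) by auto
        then show "h integrable_on (\<Union>i\<in>C'. {fst i..snd i})" by (rule h_int) (use IU Uab in auto)
        show "h integrable_on U" by (rule h_int[OF Um Uab])
        show "\<forall>x\<in>U. 0 \<le> h x" by (auto simp: h_def)
      qed
      also have "\<dots> = integral (U - G) (\<lambda>x. \<bar>g x\<bar>)" by (rule h_eq[OF Um Uab])
      also have "\<dots> \<le> t * e" by (rule intUG)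
      finally have "t * (\<Sum>i\<in>C'. snd i - fst i) \<le> t * e" .
      then have "(\<Sum>i\<in>C'. snd i - fst i) \<le> e" using t by simp
      with m1 show ?thesis by linarith
    qed
    define W where "W = (\<Union>i\<in>C. cball (ct i) (rd i))"
    have Wm: "W \<in> lmeasurable" unfolding W_def
      by (rule fmeasurable_UN_bound[OF C(1) _ fb]) auto
    have Wle: "measure lebesgue W \<le> e" unfolding W_def
      by (rule measure_UN_bound[OF C(1) _ fb]) auto
    have EW: "E - W \<in> lmeasurable" "measure lebesgue (E - W) = 0"
      using C(4) negligible_imp_measurable negligible_imp_measure0 unfolding W_def by auto
    have "E \<subseteq> (E - W) \<union> W" by auto
    moreover have "(E - W) \<union> W \<in> lmeasurable" using EW(1) Wm by (rule fmeasurable.Un)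
    moreover have "measure lebesgue ((E - W) \<union> W) \<le> e"
    proof -
      have "measure lebesgue ((E - W) \<union> W) \<le> measure lebesgue (E - W) + measure lebesgue W"
        by (rule measure_Un_le) (use EW(1) Wm in auto)
      then show ?thesis using EW(2) Wle by linarith
    qed
    ultimately show "\<exists>T. E \<subseteq> T \<and> T \<in> lmeasurable \<and> measure lebesgue T \<le> e" by blast
  qed
qed



lemma CLg:
  fixes g :: "real \<Rightarrow> real"
  assumes g: "g absolutely_integrable_on {a..b}" and pq: "p < q"
  shows "negligible {x \<in> {a<..<b}. g x < p \<and> (\<forall>\<delta>>0. \<exists>c d. c \<le> x \<and> x \<le> d \<and> c < d \<and> d - c < \<delta> \<and>
                 {c..d} \<subseteq> {a<..<b} \<and> q * (d - c) < integral {c..d} g)}"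
proof -
  define g' where "g' x = g x - p" for x
  have g': "g' absolutely_integrable_on {a..b}" unfolding g'_def
    by (rule set_integral_diff(1)[OF g absolutely_integrable_on_const]) simp
  have N: "negligible {x \<in> {a<..<b}. g' x < 0 \<and> (\<forall>\<delta>>0. \<exists>c d. c \<le> x \<and> x \<le> d \<and> c < d \<and> d - c < \<delta> \<and>
                 {c..d} \<subseteq> {a<..<b} \<and> (q - p) * (d - c) < integral {c..d} g')}"
    using CL0[OF g', of "q - p"] pq by simp
  show ?thesis
  proof (rule negligible_subset[OF N], safe)
    fix x assume x: "x \<in> {a<..<b}" "g x < p" and
      H: "\<forall>\<delta>>0. \<exists>c d. c \<le> x \<and> x \<le> d \<and> c < d \<and> d - c < \<delta> \<and> {c..d} \<subseteq> {a<..<b} \<and> q * (d - c) < integral {c..d} g"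
    show "g' x < 0" using x unfolding g'_def by simp
    fix \<delta> :: real assume "\<delta> > 0"
    then obtain c d where cd: "c \<le> x" "x \<le> d" "c < d" "d - c < \<delta>" "{c..d} \<subseteq> {a<..<b}" "q * (d - c) < integral {c..d} g"
      using H by blast
    have gi: "g integrable_on {c..d}"
      by (rule integrable_on_subinterval[OF ai[OF g]]) (use cd(5) in auto)
    have "integral {c..d} g' = integral {c..d} g - integral {c..d} (\<lambda>x. p)" unfolding g'_def
      by (rule integral_diff[OF gi integrable_const_ivl])
    also have "integral {c..d} (\<lambda>x. p) = (d - c) * p" using cd(3) by simp
    finally have "integral {c..d} g' = integral {c..d} g - (d - c) * p" .
    then have "(q - p) * (d - c) < integral {c..d} g'" using cd(6) by (simp add: algebra_simps)
    then show "\<exists>c d. c \<le> x \<and> x \<le> d \<and> c < d \<and> d - c < \<delta> \<and> {c..d} \<subseteq> {a<..<b} \<and> (q - p) * (d - c) < integral {c..d} g'"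
      using cd by blast
  qed
qed

lemma quot_bound:
  fixes L I lo hi gx e :: real
  assumes "L > 0" "lo * L \<le> I" "I \<le> hi * L" "gx - e < lo" "hi < gx + e"
  shows "\<bar>I / L - gx\<bar> < e"
proof -
  have "I / L \<le> hi" using assms(1,3) by (simp add: pos_divide_le_eq)
  moreover have "lo \<le> I / L" using assms(1,2) by (simp add: pos_le_divide_eq)
  ultimately show ?thesis using assms(4,5) by (simp add: abs_less_iff)
qed



lemma LD:
  fixes g :: "real \<Rightarrow> real"
  assumes g: "g absolutely_integrable_on {a..b}"
  shows "\<exists>N. negligible N \<and> (\<forall>x\<in>{a<..<b} - N. ((\<lambda>y. integral {a..y} g) has_real_derivative g x) (at x))"
proof -
  define A where "A f p q = {x \<in> {a<..<b}. f x < p \<and> (\<forall>\<delta>>0. \<exists>c d. c \<le> x \<and> x \<le> d \<and> c < d \<and> d - c < \<delta> \<and>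
                 {c..d} \<subseteq> {a<..<b} \<and> q * (d - c) < integral {c..d} f)}" for f :: "real \<Rightarrow> real" and p q
  have mg: "(\<lambda>x. - g x) absolutely_integrable_on {a..b}"
    using absolutely_integrable_scaleR_left[OF g, of "-1"] by simp
  define P where "P = {(p, q). p \<in> \<rat> \<and> q \<in> \<rat> \<and> p < (q::real)}"
  define N where "N = \<Union>((\<lambda>(p,q). A g p q \<union> A (\<lambda>x. - g x) p q) ` P)"
  have cP: "countable P"
  proof (rule countable_subset)
    show "P \<subseteq> \<rat> \<times> \<rat>" unfolding P_def by auto
    show "countable (\<rat> \<times> (\<rat>::real set))" by (intro countable_SIGMA countable_rat)
  qed
  have NN: "negligible N" unfolding N_def
  proof (rule negligible_countable_Union)
    show "countable ((\<lambda>(p,q). A g p q \<union> A (\<lambda>x. - g x) p q) ` P)" by (rule countable_image[OF cP])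
    fix S assume "S \<in> (\<lambda>(p,q). A g p q \<union> A (\<lambda>x. - g x) p q) ` P"
    then obtain p q where pq: "p < q" and S: "S = A g p q \<union> A (\<lambda>x. - g x) p q" unfolding P_def by auto
    have n1: "negligible (A g p q)" unfolding A_def by (rule CLg[OF g pq])
    have n2: "negligible (A (\<lambda>x. - g x) p q)" unfolding A_def by (rule CLg[OF mg pq])
    show "negligible S" unfolding S using n1 n2 by (rule negligible_Un)
  qed
  define F where "F y = integral {a..y} g" for y
  have gi: "g integrable_on {a..b}" by (rule ai[OF g])
  have Fdiff: "F d - F c = integral {c..d} g" if "a \<le> c" "c \<le> d" "d \<le> b" for c d
  proof -
    have "integral {a..c} g + integral {c..d} g = integral {a..d} g"
      by (rule Henstock_Kurzweil_Integration.integral_combine[OF that(1,2)])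
        (rule integrable_on_subinterval[OF gi], use that in auto)
    then show ?thesis unfolding F_def by simp
  qed
  have "(F has_real_derivative g x) (at x)" if x: "x \<in> {a<..<b} - N" for x
  proof -
    have xab: "a < x" "x < b" using x by auto
    have "((\<lambda>y. (F y - F x) / (y - x)) \<longlongrightarrow> g x) (at x)"
      unfolding LIM_eq
    proof (intro allI impI)
      fix e :: real assume e: "e > 0"
      obtain p where p: "p \<in> \<rat>" "g x < p" "p < g x + e" using Rats_dense_in_real[of "g x" "g x + e"] e by auto
      obtain q where q: "q \<in> \<rat>" "p < q" "q < g x + e" using Rats_dense_in_real[of p "g x + e"] p by auto
      obtain p2 where p2: "p2 \<in> \<rat>" "- g x < p2" "p2 < - g x + e" using Rats_dense_in_real[of "- g x" "- g x + e"] e by auto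
      obtain q2 where q2: "q2 \<in> \<rat>" "p2 < q2" "q2 < - g x + e" using Rats_dense_in_real[of p2 "- g x + e"] p2 by auto
      have "(p, q) \<in> P" "(p2, q2) \<in> P" unfolding P_def using p q p2 q2 by auto
      then have "x \<notin> A g p q" "x \<notin> A (\<lambda>x. - g x) p2 q2" using x unfolding N_def by auto
      note nA = this
      have "\<not> (\<forall>\<delta>>0. \<exists>c d. c \<le> x \<and> x \<le> d \<and> c < d \<and> d - c < \<delta> \<and>
                 {c..d} \<subseteq> {a<..<b} \<and> q * (d - c) < integral {c..d} g)"
        using nA(1) x p(2) unfolding A_def by blast
      then obtain \<delta>1 where d1a: "\<delta>1 > 0" "\<forall>c d. \<not> (c \<le> x \<and> x \<le> d \<and> c < d \<and> d - c < \<delta>1 \<and>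
                 {c..d} \<subseteq> {a<..<b} \<and> q * (d - c) < integral {c..d} g)" by blast
      have d1: "integral {c..d} g \<le> q * (d - c)"
        if "c \<le> x" "x \<le> d" "c < d" "d - c < \<delta>1" "{c..d} \<subseteq> {a<..<b}" for c d
        using d1a(2) that by (meson not_less)
      have "\<not> (\<forall>\<delta>>0. \<exists>c d. c \<le> x \<and> x \<le> d \<and> c < d \<and> d - c < \<delta> \<and>
                 {c..d} \<subseteq> {a<..<b} \<and> q2 * (d - c) < integral {c..d} (\<lambda>x. - g x))"
        using nA(2) x p2(2) unfolding A_def by blast
      then obtain \<delta>2 where d2a: "\<delta>2 > 0" "\<forall>c d. \<not> (c \<le> x \<and> x \<le> d \<and> c < d \<and> d - c < \<delta>2 \<and>
                 {c..d} \<subseteq> {a<..<b} \<and> q2 * (d - c) < integral {c..d} (\<lambda>x. - g x))" by blast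
      have d2: "integral {c..d} (\<lambda>x. - g x) \<le> q2 * (d - c)"
        if "c \<le> x" "x \<le> d" "c < d" "d - c < \<delta>2" "{c..d} \<subseteq> {a<..<b}" for c d
        using d2a(2) that by (meson not_less)
      have d2': "- q2 * (d - c) \<le> integral {c..d} g"
        if "c \<le> x" "x \<le> d" "c < d" "d - c < \<delta>2" "{c..d} \<subseteq> {a<..<b}" for c d
        using d2[OF that] by simp
      define s where "s = min (min \<delta>1 \<delta>2) (min (x - a) (b - x))"
      have s: "s > 0" using d1a(1) d2a(1) xab unfolding s_def by auto
      have "norm ((F y - F x) / (y - x) - g x) < e" if y: "y \<noteq> x" "norm (y - x) < s" for y
      proof (cases "y > x")
        case True
        have yb: "y < b" "y - x < \<delta>1" "y - x < \<delta>2" using y True unfolding s_def by auto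
        have sub: "{x..y} \<subseteq> {a<..<b}" using xab yb by auto
        have "F y - F x = integral {x..y} g" by (rule Fdiff) (use xab yb True in auto)
        moreover have "\<bar>integral {x..y} g / (y - x) - g x\<bar> < e"
          by (rule quot_bound[of _ "- q2" _ q]) (use True d1[OF order_refl _ True yb(2) sub] d2'[OF order_refl _ True yb(3) sub] q q2 in auto)
        ultimately show ?thesis by simp
      next
        case False
        then have yx: "y < x" using y(1) by auto
        have ya: "a < y" "x - y < \<delta>1" "x - y < \<delta>2" using y yx unfolding s_def by auto
        have sub: "{y..x} \<subseteq> {a<..<b}" using xab ya by auto
        have "F x - F y = integral {y..x} g" by (rule Fdiff) (use xab ya yx in auto)
        then have eq: "(F y - F x) / (y - x) = integral {y..x} g / (x - y)"
          by (metis minus_diff_eq minus_divide_divide)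
        have "\<bar>integral {y..x} g / (x - y) - g x\<bar> < e"
          by (rule quot_bound[of _ "- q2" _ q]) (use yx d1[OF _ order_refl yx ya(2) sub] d2'[OF _ order_refl yx ya(3) sub] q q2 in auto)
        then show ?thesis using eq by simp
      qed
      then show "\<exists>s>0. \<forall>y. y \<noteq> x \<and> norm (y - x) < s \<longrightarrow> norm ((F y - F x) / (y - x) - g x) < e"
        using s by blast
    qed
    then show ?thesis unfolding has_field_derivative_iff .
  qed
  then show ?thesis using NN unfolding F_def by blast
qed



lemma W12_deriv:
  assumes "W12 a b f" "a < b"
  shows "\<exists>g N. g integrable_on {a..b} \<and> (\<lambda>x. (g x)\<^sup>2) integrable_on {a..b} \<and>
     f b - f a = integral {a..b} g \<and> negligible N \<and> (\<forall>x\<in>{a..b} - N. deriv f x = g x)"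
proof -
  obtain g where g: "g absolutely_integrable_on {a..b}" "(\<lambda>x. (g x)\<^sup>2) integrable_on {a..b}"
    "\<forall>x\<in>{a..b}. f x = f a + integral {a..x} g"
    using assms(1) unfolding W12_def by blast
  obtain N where N: "negligible N" "\<forall>x\<in>{a<..<b} - N. ((\<lambda>y. integral {a..y} g) has_real_derivative g x) (at x)"
    using LD[OF g(1)] by blast
  have "deriv f x = g x" if x: "x \<in> {a..b} - (N \<union> {a, b})" for x
  proof -
    have x': "x \<in> {a<..<b} - N" using x by auto
    have d0: "((\<lambda>y. integral {a..y} g) has_real_derivative g x) (at x)" using N(2) x' by blast
    have "((\<lambda>y. f a + integral {a..y} g) has_real_derivative 0 + g x) (at x)"
      by (rule DERIV_add[OF DERIV_const d0])
    then have d1: "((\<lambda>y. f a + integral {a..y} g) has_real_derivative g x) (at x)" by simp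
    have eqf: "\<And>y. y \<in> {a<..<b} \<Longrightarrow> f a + integral {a..y} g = f y"
    proof -
      fix y assume "y \<in> {a<..<b}"
      then have "y \<in> {a..b}" by auto
      then show "f a + integral {a..y} g = f y" using g(3) by metis
    qed
    have "(f has_real_derivative g x) (at x)"
      by (rule has_field_derivative_transform_within_open[OF d1 open_greaterThanLessThan _ eqf]) (use x' in auto)
    then show ?thesis by (rule DERIV_imp_deriv)
  qed
  then have D: "\<forall>x\<in>{a..b} - (N \<union> {a, b}). deriv f x = g x" by blast
  have NN: "negligible (N \<union> {a, b})" using N(1) by auto
  have fb: "f b - f a = integral {a..b} g"
  proof -
    have "b \<in> {a..b}" using assms(2) by auto
    then show ?thesis using g(3) by (metis add_diff_cancel_left')
  qed
  have gi: "g integrable_on {a..b}" using g(1) absolutely_integrable_on_def by blast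
  show ?thesis by (rule exI[of _ g], rule exI[of _ "N \<union> {a, b}"]) (intro conjI gi g(2) fb NN D)
qed



theorem mainTheorem4:
  fixes u1 u2 v1 v2 :: "real \<Rightarrow> real" and a b :: real
  assumes "pluri_diamond u1 u2"
    and "0 \<le> a" and "a < b" and "b \<le> 1"
    and "dir_minimizing a b v1 v2"
    and "v1 a = u1 a" and "v2 a = u2 a" and "v1 b = u1 b" and "v2 b = u2 b"
  shows "Dir a b u1 u2 \<le> 4 * Dir a b v1 v2"
proof -
  obtain E0 where cE: "countable E0" and LF: "\<forall>x\<in>{0..1} - E0. \<exists>l r. l < x \<and> x < r \<and>
     ((\<exists>p. \<forall>z\<in>{l<..<r}. u1 z = z + p \<and> u2 z = z + p) \<or>
      (\<exists>h c. \<forall>z\<in>{l<..<r}. u1 z = h \<and> u2 z = z + c) \<or>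
      (\<exists>h c. \<forall>z\<in>{l<..<r}. u1 z = z + c \<and> u2 z = h))"
    using local_forms[OF assms(1)] by blast
  have cu: "continuous_on {0..1} u1" "continuous_on {0..1} u2"
    using assms(1) unfolding pluri_diamond_def by auto
  define f where "f z = u1 z + u2 z - z" for z
  have loc: "\<exists>r>x. \<forall>z. x < z \<and> z < r \<longrightarrow> f x \<le> f z" if x: "x \<in> {0..1} - E0" for x
  proof -
    obtain l r where lr: "l < x" "x < r" and
      C: "(\<exists>p. \<forall>z\<in>{l<..<r}. u1 z = z + p \<and> u2 z = z + p) \<or>
      (\<exists>h c. \<forall>z\<in>{l<..<r}. u1 z = h \<and> u2 z = z + c) \<or>
      (\<exists>h c. \<forall>z\<in>{l<..<r}. u1 z = z + c \<and> u2 z = h)" using LF x by blast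
    have "f x \<le> f z" if z: "x < z" "z < r" for z
    proof -
      have xi: "x \<in> {l<..<r}" and zi: "z \<in> {l<..<r}" using lr z by auto
      from C show ?thesis
      proof (elim disjE exE)
        fix p assume "\<forall>z\<in>{l<..<r}. u1 z = z + p \<and> u2 z = z + p"
        then show ?thesis using xi zi z unfolding f_def by auto
      next
        fix h c assume "\<forall>z\<in>{l<..<r}. u1 z = h \<and> u2 z = z + c"
        then show ?thesis using xi zi unfolding f_def by auto
      next
        fix h c assume "\<forall>z\<in>{l<..<r}. u1 z = z + c \<and> u2 z = h"
        then show ?thesis using xi zi unfolding f_def by auto
      qed
    qed
    then show ?thesis using lr by blast
  qed
  have der: "\<exists>d1 d2. (u1 has_real_derivative d1) (at x) \<and> (u2 has_real_derivative d2) (at x) \<and> d1\<^sup>2 + d2\<^sup>2 \<le> 2"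
    if x: "x \<in> {0..1} - E0" for x
  proof -
    obtain l r where lr: "l < x" "x < r" and
      C: "(\<exists>p. \<forall>z\<in>{l<..<r}. u1 z = z + p \<and> u2 z = z + p) \<or>
      (\<exists>h c. \<forall>z\<in>{l<..<r}. u1 z = h \<and> u2 z = z + c) \<or>
      (\<exists>h c. \<forall>z\<in>{l<..<r}. u1 z = z + c \<and> u2 z = h)" using LF x by blast
    have xi: "x \<in> {l<..<r}" using lr by auto
    have lin: "((\<lambda>z. z + c) has_real_derivative 1) (at x)" for c :: real
      using DERIV_add[OF DERIV_ident DERIV_const[of c "at x"]] by simp
    have cst: "((\<lambda>z. h) has_real_derivative 0) (at x)" for h :: real by simp
    from C show ?thesis
    proof (elim disjE exE)
      fix p assume A: "\<forall>z\<in>{l<..<r}. u1 z = z + p \<and> u2 z = z + p"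
      have "(u1 has_real_derivative 1) (at x)"
        by (rule has_field_derivative_transform_within_open[OF lin open_greaterThanLessThan xi]) (use A in auto)
      moreover have "(u2 has_real_derivative 1) (at x)"
        by (rule has_field_derivative_transform_within_open[OF lin open_greaterThanLessThan xi]) (use A in auto)
      ultimately show ?thesis by (intro exI[of _ 1] conjI) auto
    next
      fix h c assume A: "\<forall>z\<in>{l<..<r}. u1 z = h \<and> u2 z = z + c"
      have "(u1 has_real_derivative 0) (at x)"
        by (rule has_field_derivative_transform_within_open[OF cst open_greaterThanLessThan xi]) (use A in auto)
      moreover have "(u2 has_real_derivative 1) (at x)"
        by (rule has_field_derivative_transform_within_open[OF lin open_greaterThanLessThan xi]) (use A in auto)
      ultimately show ?thesis by (intro exI[of _ 0] exI[of _ 1] conjI) auto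
    next
      fix h c assume A: "\<forall>z\<in>{l<..<r}. u1 z = z + c \<and> u2 z = h"
      have "(u1 has_real_derivative 1) (at x)"
        by (rule has_field_derivative_transform_within_open[OF lin open_greaterThanLessThan xi]) (use A in auto)
      moreover have "(u2 has_real_derivative 0) (at x)"
        by (rule has_field_derivative_transform_within_open[OF cst open_greaterThanLessThan xi]) (use A in auto)
      ultimately show ?thesis by (intro exI[of _ 1] exI[of _ 0] conjI) auto
    qed
  qed
  have cf: "continuous_on {0..1} f" unfolding f_def using cu by (intro continuous_intros)
  have fab: "f a \<le> f b"
    by (rule mono_countable[OF cf cE loc]) (use assms(2-4) in auto)
  define L where "L = b - a"
  have L: "L > 0" using assms(3) unfolding L_def by simp
  define D1 where "D1 = u1 b - u1 a"
  define D2 where "D2 = u2 b - u2 a"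
  have DL: "D1 + D2 \<ge> L" using fab unfolding f_def D1_def D2_def L_def by simp
  have Du: "Dir a b u1 u2 \<le> 2 * L"
  proof -
    define F where "F x = (deriv u1 x)\<^sup>2 + (deriv u2 x)\<^sup>2" for x
    define G where "G x = min (F x) 2" for x
    have "integral {a..b} F = integral {a..b} G"
    proof (rule integral_spike[OF negl_countable[OF cE]])
      fix x assume x: "x \<in> {a..b} - E0"
      then have "x \<in> {0..1} - E0" using assms(2-4) by auto
      then obtain d1 d2 where d: "(u1 has_real_derivative d1) (at x)" "(u2 has_real_derivative d2) (at x)" "d1\<^sup>2 + d2\<^sup>2 \<le> 2"
        using der by blast
      have "F x = d1\<^sup>2 + d2\<^sup>2" unfolding F_def using DERIV_imp_deriv[OF d(1)] DERIV_imp_deriv[OF d(2)] by simp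
      then show "G x = F x" unfolding G_def using d(3) by simp
    qed
    moreover have "integral {a..b} G \<le> 2 * L"
    proof (cases "G integrable_on {a..b}")
      case True
      have "integral {a..b} G \<le> integral {a..b} (\<lambda>x. 2::real)"
        by (rule integral_le[OF True]) (auto simp: G_def)
      also have "\<dots> = 2 * L" using assms(3) unfolding L_def by simp
      finally show ?thesis .
    next
      case False
      then show ?thesis using not_integrable_integral[OF False] L by simp
    qed
    ultimately show ?thesis unfolding Dir_def F_def by simp
  qed
  have Q: "Q2_sobolev a b v1 v2" using assms(5) unfolding dir_minimizing_def by blast
  have W1: "W12 a b v1" and W2: "W12 a b v2" using Q unfolding Q2_sobolev_def by auto
  obtain g1 N1 where g1: "g1 integrable_on {a..b}" "(\<lambda>x. (g1 x)\<^sup>2) integrable_on {a..b}"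
     "v1 b - v1 a = integral {a..b} g1" "negligible N1" "\<forall>x\<in>{a..b} - N1. deriv v1 x = g1 x"
    using W12_deriv[OF W1 assms(3)] by blast
  obtain g2 N2 where g2: "g2 integrable_on {a..b}" "(\<lambda>x. (g2 x)\<^sup>2) integrable_on {a..b}"
     "v2 b - v2 a = integral {a..b} g2" "negligible N2" "\<forall>x\<in>{a..b} - N2. deriv v2 x = g2 x"
    using W12_deriv[OF W2 assms(3)] by blast
  have "Dir a b v1 v2 = integral {a..b} (\<lambda>x. (g1 x)\<^sup>2 + (g2 x)\<^sup>2)"
    unfolding Dir_def
  proof (rule integral_spike[of "N1 \<union> N2"])
    show "negligible (N1 \<union> N2)" using g1(4) g2(4) by auto
    fix x assume "x \<in> {a..b} - (N1 \<union> N2)"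
    then show "(g1 x)\<^sup>2 + (g2 x)\<^sup>2 = (deriv v1 x)\<^sup>2 + (deriv v2 x)\<^sup>2" using g1(5) g2(5) by auto
  qed
  also have "\<dots> = integral {a..b} (\<lambda>x. (g1 x)\<^sup>2) + integral {a..b} (\<lambda>x. (g2 x)\<^sup>2)"
    by (rule integral_add[OF g1(2) g2(2)])
  finally have Dv: "Dir a b v1 v2 = integral {a..b} (\<lambda>x. (g1 x)\<^sup>2) + integral {a..b} (\<lambda>x. (g2 x)\<^sup>2)" .
  have c1: "D1\<^sup>2 / L \<le> integral {a..b} (\<lambda>x. (g1 x)\<^sup>2)"
    using cauchy_schwarz_int[OF g1(1,2) assms(3)] g1(3) assms(6,8) unfolding D1_def L_def by simp
  have c2: "D2\<^sup>2 / L \<le> integral {a..b} (\<lambda>x. (g2 x)\<^sup>2)"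
    using cauchy_schwarz_int[OF g2(1,2) assms(3)] g2(3) assms(7,9) unfolding D2_def L_def by simp
  have sq: "L\<^sup>2 \<le> (D1 + D2)\<^sup>2" using DL L by (intro power_mono) auto
  have "(D1 + D2)\<^sup>2 \<le> 2 * (D1\<^sup>2 + D2\<^sup>2)"
  proof -
    have "0 \<le> (D1 - D2)\<^sup>2" by simp
    then show ?thesis by (simp add: power2_eq_square algebra_simps)
  qed
  with sq have "L * L \<le> 2 * (D1\<^sup>2 + D2\<^sup>2)" by (simp add: power2_eq_square)
  then have "L / 2 \<le> (D1\<^sup>2 + D2\<^sup>2) / L" using L by (simp add: field_simps)
  also have "\<dots> = D1\<^sup>2 / L + D2\<^sup>2 / L" by (simp add: add_divide_distrib)
  also have "\<dots> \<le> Dir a b v1 v2" using c1 c2 Dv by simp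
  finally have "L / 2 \<le> Dir a b v1 v2" .
  with Du show ?thesis by simp
qed


end
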